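(* Let $a>0$ and let $L_2=a\mathbb{Z}^3\cup a(\mathbb{Z}+\tfrac12)^3\cup W$. Then $$\sup_{x\in\mathbb{R}^3}\ \min_{p\in L_2}|x-p|=\frac{5\sqrt3}{24}a ,$$ and the set of points $x$ where this supremum is attained is exactly $$\Lambda=\Big\{p+\tfrac{5a}{24}(s_1,s_2,s_3):\ p\in a\mathbb{Z}^3\cup a(\mathbb{Z}+\tfrac12)^3,\ s_1,s_2,s_3\in\{-1,1\}\Big\}.$$ For example, $(5a/24,5a/24,5a/24)$ has exactly seven nearest points in $L_2$ at this distance: the origin and the six points $(0,a/4,a/2)$, $(0,a/2,a/4)$, $(a/4,a/2,0)$, $(a/2,a/4,0)$, $(a/4,0,a/2)$, $(a/2,0,a/4)$ of $W$.
   Context: Fix $a>0$. $W\subset\mathbb{R}^3$ is the set of all points $a(u_1,u_2,u_3)$ such that $(u_1,u_2,u_3)$ is a permutation of a triple $(i,\ j+\tfrac12,\ k+\varepsilon)$ with $i,j,k\in\mathbb{Z}$ and $\varepsilon\in\{\tfrac14,\tfrac34\}$. $|\cdot|$ is the Euclidean norm. *)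

theory Defs
  imports "HOL-Analysis.Analysis"
begin

definition pt :: "real \<Rightarrow> real \<Rightarrow> real \<Rightarrow> real^3" where
  "pt x y z = vector [x, y, z]"

definition perms3 :: "real \<times> real \<times> real \<Rightarrow> (real \<times> real \<times> real) set" where
  "perms3 t = (case t of (x, y, z) \<Rightarrow>
     {(x, y, z), (x, z, y), (y, x, z), (y, z, x), (z, x, y), (z, y, x)})"

definition Lint :: "real \<Rightarrow> (real^3) set" where
  "Lint a = {pt (a * of_int i) (a * of_int j) (a * of_int k) | i j k. True}"

definition Lhalf :: "real \<Rightarrow> (real^3) set" where
  "Lhalf a = {pt (a * (of_int i + 1/2)) (a * (of_int j + 1/2)) (a * (of_int k + 1/2)) | i j k. True}"

definition W :: "real \<Rightarrow> (real^3) set" where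
  "W a = {a *\<^sub>R pt u1 u2 u3 | u1 u2 u3. \<exists>(i::int) (j::int) (k::int) (\<epsilon>::real).
            \<epsilon> \<in> {1/4, 3/4} \<and> (u1, u2, u3) \<in> perms3 (of_int i, of_int j + 1/2, of_int k + \<epsilon>)}"

definition L2 :: "real \<Rightarrow> (real^3) set" where
  "L2 a = Lint a \<union> Lhalf a \<union> W a"

definition Lambda :: "real \<Rightarrow> (real^3) set" where
  "Lambda a = {p + (5 * a / 24) *\<^sub>R pt s1 s2 s3 | p s1 s2 s3.
                 p \<in> Lint a \<union> Lhalf a \<and> s1 \<in> {-1, 1} \<and> s2 \<in> {-1, 1} \<and> s3 \<in> {-1, 1}}"

end

theory Submission
  imports Defs
begin


lemma intshift: "n \<in> \<int> \<Longrightarrow> (x + n \<in> \<int>) = (x \<in> \<int>)"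
  by (metis Ints_add Ints_diff add_diff_cancel_right')
lemma intneg: "(-x \<in> \<int>) = ((x::real) \<in> \<int>)"
  by (metis Ints_minus minus_minus)
lemma intcong: "x - y \<in> \<int> \<Longrightarrow> (x \<in> \<int>) = ((y::real) \<in> \<int>)"
  by (metis intshift diff_add_cancel add.commute)

definition isZ :: "real \<Rightarrow> bool" where "isZ t \<longleftrightarrow> t \<in> \<int>"
definition isH :: "real \<Rightarrow> bool" where "isH t \<longleftrightarrow> t - 1/2 \<in> \<int>"
definition isQ :: "real \<Rightarrow> bool" where "isQ t \<longleftrightarrow> t - 1/4 \<in> \<int> \<or> t - 3/4 \<in> \<int>"
definition lamZ :: "real \<Rightarrow> bool" where "lamZ t \<longleftrightarrow> t - 5/24 \<in> \<int> \<or> t + 5/24 \<in> \<int>"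
definition lamH :: "real \<Rightarrow> bool" where "lamH t \<longleftrightarrow> t - 5/24 - 1/2 \<in> \<int> \<or> t + 5/24 - 1/2 \<in> \<int>"

lemma isZ_shift: "n \<in> \<int> \<Longrightarrow> isZ (t + n) = isZ t"
  unfolding isZ_def by (rule intshift)
lemma isH_shift: "n \<in> \<int> \<Longrightarrow> isH (t + n) = isH t"
  unfolding isH_def by (rule intcong) simp
lemma isQ_shift: "n \<in> \<int> \<Longrightarrow> isQ (t + n) = isQ t"
  unfolding isQ_def using intcong[of "t + n - 1/4" "t - 1/4"] intcong[of "t + n - 3/4" "t - 3/4"] by simp
lemma lamZ_shift: "n \<in> \<int> \<Longrightarrow> lamZ (t + n) = lamZ t"
  unfolding lamZ_def using intcong[of "t + n - 5/24" "t - 5/24"] intcong[of "t + n + 5/24" "t + 5/24"] by simp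
lemma lamH_shift: "n \<in> \<int> \<Longrightarrow> lamH (t + n) = lamH t"
  unfolding lamH_def using intcong[of "t + n - 5/24 - 1/2" "t - 5/24 - 1/2"] intcong[of "t + n + 5/24 - 1/2" "t + 5/24 - 1/2"] by simp

lemma isZ_neg: "isZ (-t) = isZ t" unfolding isZ_def by (rule intneg)
lemma isH_neg: "isH (-t) = isH t"
proof -
  have "(-t - 1/2 \<in> \<int>) = (-(t - 1/2) \<in> \<int>)" by (rule intcong) (simp add: algebra_simps)
  then show ?thesis unfolding isH_def by (metis intneg)
qed
lemma isQ_neg: "isQ (-t) = isQ t"
proof -
  have "(-t - 1/4 \<in> \<int>) = (-(t - 3/4) \<in> \<int>)" by (rule intcong) (simp add: algebra_simps)
  moreover have "(-t - 3/4 \<in> \<int>) = (-(t - 1/4) \<in> \<int>)" by (rule intcong) (simp add: algebra_simps)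
  ultimately show ?thesis unfolding isQ_def by (metis intneg)
qed
lemma lamZ_neg: "lamZ (-t) = lamZ t"
proof -
  have "(-t - 5/24 \<in> \<int>) = (-(t + 5/24) \<in> \<int>)" by (rule intcong) (simp add: algebra_simps)
  moreover have "(-t + 5/24 \<in> \<int>) = (-(t - 5/24) \<in> \<int>)" by (rule intcong) (simp add: algebra_simps)
  ultimately show ?thesis unfolding lamZ_def by (metis intneg)
qed
lemma lamH_neg: "lamH (-t) = lamH t"
proof -
  have "(-t - 5/24 - 1/2 \<in> \<int>) = (-(t + 5/24 - 1/2) \<in> \<int>)" by (rule intcong) (simp add: algebra_simps)
  moreover have "(-t + 5/24 - 1/2 \<in> \<int>) = (-(t - 5/24 - 1/2) \<in> \<int>)" by (rule intcong) (simp add: algebra_simps)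
  ultimately show ?thesis unfolding lamH_def by (metis intneg)
qed

lemma isZ_half: "isZ (t + 1/2) = isH t"
  unfolding isZ_def isH_def by (rule intcong) simp
lemma isH_half: "isH (t + 1/2) = isZ t"
  unfolding isZ_def isH_def by simp
lemma isQ_half: "isQ (t + 1/2) = isQ t"
  unfolding isQ_def using intcong[of "t + 1/2 - 1/4" "t - 3/4"] intcong[of "t + 1/2 - 3/4" "t - 1/4"] by auto
lemma lamZ_half: "lamZ (t + 1/2) = lamH t"
  unfolding lamZ_def lamH_def using intcong[of "t + 1/2 - 5/24" "t - 5/24 - 1/2"] intcong[of "t + 1/2 + 5/24" "t + 5/24 - 1/2"] by auto
lemma lamH_half: "lamH (t + 1/2) = lamZ t"
  unfolding lamZ_def lamH_def by (simp add: algebra_simps)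

definition inL :: "real \<Rightarrow> real \<Rightarrow> real \<Rightarrow> bool" where
  "inL u v w \<longleftrightarrow> (isZ u \<and> isZ v \<and> isZ w) \<or> (isH u \<and> isH v \<and> isH w)
     \<or> (isZ u \<and> isH v \<and> isQ w) \<or> (isZ u \<and> isQ v \<and> isH w) \<or> (isH u \<and> isZ v \<and> isQ w)
     \<or> (isH u \<and> isQ v \<and> isZ w) \<or> (isQ u \<and> isZ v \<and> isH w) \<or> (isQ u \<and> isH v \<and> isZ w)"
definition inLam :: "real \<Rightarrow> real \<Rightarrow> real \<Rightarrow> bool" where
  "inLam u v w \<longleftrightarrow> (lamZ u \<and> lamZ v \<and> lamZ w) \<or> (lamH u \<and> lamH v \<and> lamH w)"
definition d3 :: "real \<Rightarrow> real \<Rightarrow> real \<Rightarrow> real \<Rightarrow> real \<Rightarrow> real \<Rightarrow> real" where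
  "d3 u v w p q r = (u-p)^2 + (v-q)^2 + (w-r)^2"
definition Pr :: "real \<Rightarrow> real \<Rightarrow> real \<Rightarrow> bool" where
  "Pr u v w \<longleftrightarrow> (\<exists>p q r. inL p q r \<and> d3 u v w p q r \<le> 75/576 \<and> (\<not> inLam u v w \<longrightarrow> d3 u v w p q r < 75/576))"

lemma inL_shift: "n \<in> \<int> \<Longrightarrow> inL (u+n) v w = inL u v w"
  unfolding inL_def by (simp add: isZ_shift isH_shift isQ_shift)
lemma inLam_shift: "n \<in> \<int> \<Longrightarrow> inLam (u+n) v w = inLam u v w"
  unfolding inLam_def by (simp add: lamZ_shift lamH_shift)
lemma inL_neg: "inL (-u) v w = inL u v w"
  unfolding inL_def by (simp add: isZ_neg isH_neg isQ_neg)
lemma inLam_neg: "inLam (-u) v w = inLam u v w"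
  unfolding inLam_def by (simp add: lamZ_neg lamH_neg)
lemma inL_s12: "inL v u w = inL u v w"
  unfolding inL_def by (intro iffI; elim disjE conjE; simp)
lemma inL_s23: "inL u w v = inL u v w"
  unfolding inL_def by (intro iffI; elim disjE conjE; simp)
lemma inLam_s12: "inLam v u w = inLam u v w"
  unfolding inLam_def by (intro iffI; elim disjE conjE; simp)
lemma inLam_s23: "inLam u w v = inLam u v w"
  unfolding inLam_def by (intro iffI; elim disjE conjE; simp)
lemma inL_half: "inL (u+1/2) (v+1/2) (w+1/2) = inL u v w"
  unfolding inL_def isZ_half isH_half isQ_half by (intro iffI; elim disjE conjE; simp)
lemma inLam_half: "inLam (u+1/2) (v+1/2) (w+1/2) = inLam u v w"
  unfolding inLam_def lamZ_half lamH_half by (intro iffI; elim disjE conjE; simp)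

lemma Pr_shift_imp: assumes "n \<in> \<int>" "Pr (u+n) v w" shows "Pr u v w"
proof -
  obtain p q r where h: "inL p q r" "d3 (u+n) v w p q r \<le> 75/576"
     "\<not> inLam (u+n) v w \<longrightarrow> d3 (u+n) v w p q r < 75/576"
    using assms(2) unfolding Pr_def by blast
  have "inL (p - n) q r" using inL_shift[OF assms(1), of "p - n" q r] h(1) by simp
  moreover have "d3 (u+n) v w p q r = d3 u v w (p-n) q r" unfolding d3_def by (simp add: algebra_simps)
  ultimately show ?thesis using h inLam_shift[OF assms(1), of u v w] unfolding Pr_def by metis
qed
lemma Pr_shift: "n \<in> \<int> \<Longrightarrow> Pr (u+n) v w = Pr u v w"
  using Pr_shift_imp[of n u v w] Pr_shift_imp[of "-n" "u+n" v w] by auto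

lemma Pr_neg_imp: assumes "Pr (-u) v w" shows "Pr u v w"
proof -
  obtain p q r where h: "inL p q r" "d3 (-u) v w p q r \<le> 75/576"
     "\<not> inLam (-u) v w \<longrightarrow> d3 (-u) v w p q r < 75/576"
    using assms unfolding Pr_def by blast
  have "inL (-p) q r" using inL_neg[of p q r] h(1) by simp
  moreover have "d3 (-u) v w p q r = d3 u v w (-p) q r" unfolding d3_def by (simp add: algebra_simps power2_eq_square)
  ultimately show ?thesis using h inLam_neg[of u v w] unfolding Pr_def by metis
qed
lemma Pr_neg: "Pr (-u) v w = Pr u v w"
  using Pr_neg_imp[of u v w] Pr_neg_imp[of "-u" v w] by auto

lemma Pr_s12_imp: assumes "Pr v u w" shows "Pr u v w"
proof -
  obtain p q r where h: "inL p q r" "d3 v u w p q r \<le> 75/576"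
     "\<not> inLam v u w \<longrightarrow> d3 v u w p q r < 75/576"
    using assms unfolding Pr_def by blast
  have "inL q p r" using inL_s12[of q p r] h(1) by simp
  moreover have "d3 v u w p q r = d3 u v w q p r" unfolding d3_def by (simp add: algebra_simps)
  ultimately show ?thesis using h inLam_s12[of u v w] unfolding Pr_def by metis
qed
lemma Pr_s12: "Pr v u w = Pr u v w"
  using Pr_s12_imp[of u v w] Pr_s12_imp[of v u w] by auto

lemma Pr_s23_imp: assumes "Pr u w v" shows "Pr u v w"
proof -
  obtain p q r where h: "inL p q r" "d3 u w v p q r \<le> 75/576"
     "\<not> inLam u w v \<longrightarrow> d3 u w v p q r < 75/576"
    using assms unfolding Pr_def by blast
  have "inL p r q" using inL_s23[of p r q] h(1) by simp
  moreover have "d3 u w v p q r = d3 u v w p r q" unfolding d3_def by (simp add: algebra_simps)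
  ultimately show ?thesis using h inLam_s23[of u v w] unfolding Pr_def by metis
qed
lemma Pr_s23: "Pr u w v = Pr u v w"
  using Pr_s23_imp[of u v w] Pr_s23_imp[of u w v] by auto

lemma Pr_half_imp: assumes "Pr (u+1/2) (v+1/2) (w+1/2)" shows "Pr u v w"
proof -
  obtain p q r where h: "inL p q r" "d3 (u+1/2) (v+1/2) (w+1/2) p q r \<le> 75/576"
     "\<not> inLam (u+1/2) (v+1/2) (w+1/2) \<longrightarrow> d3 (u+1/2) (v+1/2) (w+1/2) p q r < 75/576"
    using assms unfolding Pr_def by blast
  have "inL (p-1/2) (q-1/2) (r-1/2)" using inL_half[of "p-1/2" "q-1/2" "r-1/2"] h(1) by simp
  moreover have "d3 (u+1/2) (v+1/2) (w+1/2) p q r = d3 u v w (p-1/2) (q-1/2) (r-1/2)"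
    unfolding d3_def by (simp add: algebra_simps)
  ultimately show ?thesis using h inLam_half[of u v w] unfolding Pr_def by metis
qed


lemma min4:
  fixes l0 l1 l2 l3 e0 e1 e2 e3 m :: real
  assumes "l0 \<ge> 0" "l1 \<ge> 0" "l2 \<ge> 0" "l3 \<ge> 0" "l0 + l1 + l2 + l3 = 1"
    "l0 * e0 + l1 * e1 + l2 * e2 + l3 * e3 = m"
  shows "e0 \<le> m \<or> e1 \<le> m \<or> e2 \<le> m \<or> e3 \<le> m"
proof (rule ccontr)
  assume "\<not> ?thesis"
  then have g: "e0 > m" "e1 > m" "e2 > m" "e3 > m" by auto
  have s: "l0 * (e0 - m) + l1 * (e1 - m) + l2 * (e2 - m) + l3 * (e3 - m) = 0"
  proof -
    have "l0 * (e0 - m) + l1 * (e1 - m) + l2 * (e2 - m) + l3 * (e3 - m) = (l0 * e0 + l1 * e1 + l2 * e2 + l3 * e3) - (l0 + l1 + l2 + l3) * m"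
      by (simp add: algebra_simps)
    then show ?thesis using assms(5,6) by simp
  qed
  have t: "l0 * (e0 - m) \<ge> 0" "l1 * (e1 - m) \<ge> 0" "l2 * (e2 - m) \<ge> 0" "l3 * (e3 - m) \<ge> 0"
    using g assms by auto
  have z0: "l0 * (e0 - m) = 0" using s t by linarith
  have z1: "l1 * (e1 - m) = 0" using s t by linarith
  have z2: "l2 * (e2 - m) = 0" using s t by linarith
  have z3: "l3 * (e3 - m) = 0" using s t by linarith
  from z0 z1 z2 z3 have "l0 * (e0 - m) = 0" "l1 * (e1 - m) = 0" "l2 * (e2 - m) = 0" "l3 * (e3 - m) = 0" .
  then have "l0 = 0" "l1 = 0" "l2 = 0" "l3 = 0" using g by auto
  then show False using assms(5) by simp
qed

lemma Pr_intro:
  assumes "inL p q r" "d3 u v w p q r \<le> 75/576 - e" "e \<ge> 0" "\<not> inLam u v w \<Longrightarrow> e > 0"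
  shows "Pr u v w"
  unfolding Pr_def using assms by (smt (verit))

lemma d3_nonneg: "d3 u v w a b c \<ge> 0" unfolding d3_def by simp

lemma d3_pos: "\<not> (u = a \<and> v = b \<and> w = c) \<Longrightarrow> d3 u v w a b c > 0"
proof -
  assume h: "\<not> (u = a \<and> v = b \<and> w = c)"
  have "(u-a)^2 > 0 \<or> (v-b)^2 > 0 \<or> (w-c)^2 > 0" using h by auto
  then show ?thesis unfolding d3_def by (smt (verit) zero_le_power2)
qed

lemma inLam_c: "inLam (5/24) (5/24) (5/24)"
  unfolding inLam_def lamZ_def by simp

lemma inL_pts: "inL 0 0 0" "inL (1/2) (1/4) 0" "inL (1/4) (1/2) 0" "inL 0 (1/4) (1/2)"
  "inL (1/2) 0 (1/4)" "inL (1/2) 0 (-1/4)"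
  unfolding inL_def isZ_def isH_def isQ_def by simp_all


lemma core:
  assumes "0 \<le> w" "w \<le> v" "v \<le> u" "u \<le> 1/2" "u + v + w \<le> 3/4"
  shows "Pr u v w"
proof (cases "u \<le> 2*(v+w)")
  case True
  have cpos: "\<not> inLam u v w \<Longrightarrow> d3 u v w (5/24) (5/24) (5/24) > 0"
    using inLam_c d3_pos by metis
  note I = Pr_intro[OF _ _ d3_nonneg cpos]
  show ?thesis
  proof (cases "u + w \<le> 2* v")
    case True
    have id: "(1 - 4*(u+v+w)/3) * d3 u v w 0 0 0 + ((8*u + 2*w - 4* v)/3) * d3 u v w (1/2) (1/4) 0
      + ((8* v - 4*u - 4*w)/3) * d3 u v w (1/4) (1/2) 0 + (2*w) * d3 u v w 0 (1/4) (1/2)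
      = 75/576 - d3 u v w (5/24) (5/24) (5/24)"
      unfolding d3_def by (simp add: power2_eq_square field_simps)
    have l: "1 - 4*(u+v+w)/3 \<ge> 0" "(8*u + 2*w - 4* v)/3 \<ge> 0" "(8* v - 4*u - 4*w)/3 \<ge> 0" "2*w \<ge> 0"
      "(1 - 4*(u+v+w)/3) + ((8*u + 2*w - 4* v)/3) + ((8* v - 4*u - 4*w)/3) + 2*w = 1"
      using assms True \<open>u \<le> 2*(v+w)\<close> by (auto simp: field_simps)
    from min4[OF l id] show ?thesis using I[OF inL_pts(1)] I[OF inL_pts(2)] I[OF inL_pts(3)] I[OF inL_pts(4)] by blast
  next
    case False
    have id: "(1 - 4*(u+v+w)/3) * d3 u v w 0 0 0 + ((4*u - 8*w + 16* v)/6) * d3 u v w (1/2) (1/4) 0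
      + ((8* v - 4*u + 8*w)/6) * d3 u v w 0 (1/4) (1/2) + ((4*u + 4*w - 8* v)/3) * d3 u v w (1/2) 0 (1/4)
      = 75/576 - d3 u v w (5/24) (5/24) (5/24)"
      unfolding d3_def by (simp add: power2_eq_square field_simps)
    have l: "1 - 4*(u+v+w)/3 \<ge> 0" "(4*u - 8*w + 16* v)/6 \<ge> 0" "(8* v - 4*u + 8*w)/6 \<ge> 0" "(4*u + 4*w - 8* v)/3 \<ge> 0"
      "(1 - 4*(u+v+w)/3) + ((4*u - 8*w + 16* v)/6) + ((8* v - 4*u + 8*w)/6) + ((4*u + 4*w - 8* v)/3) = 1"
      using assms False \<open>u \<le> 2*(v+w)\<close> by (auto simp: field_simps)
    from min4[OF l id] show ?thesis using I[OF inL_pts(1)] I[OF inL_pts(2)] I[OF inL_pts(4)] I[OF inL_pts(5)] by blast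
  qed
next
  case False
  have id: "(1 - 2*u) * d3 u v w 0 0 0 + (4* v) * d3 u v w (1/2) (1/4) 0
      + (u - 2* v + 2*w) * d3 u v w (1/2) 0 (1/4) + (u - 2* v - 2*w) * d3 u v w (1/2) 0 (-1/4)
      = 25/256 - d3 u v w (5/16) 0 0"
    unfolding d3_def by (simp add: power2_eq_square field_simps)
  have l: "1 - 2*u \<ge> 0" "4* v \<ge> 0" "u - 2* v + 2*w \<ge> 0" "u - 2* v - 2*w \<ge> 0"
      "(1 - 2*u) + 4* v + (u - 2* v + 2*w) + (u - 2* v - 2*w) = 1"
    using assms False by (auto simp: field_simps)
  have b: "(25/256::real) - d3 u v w (5/16) 0 0 \<le> 75/576 - 1/100" using d3_nonneg[of u v w "5/16" 0 0] by simp
  have e: "(0::real) \<le> 1/100" "\<not> inLam u v w \<Longrightarrow> (0::real) < 1/100" by simp_all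
  note I = Pr_intro[OF _ _ e]
  from min4[OF l id] b show ?thesis using I[OF inL_pts(1)] I[OF inL_pts(2)] I[OF inL_pts(5)] I[OF inL_pts(6)]
    by (meson order_trans)
qed


lemma sorted:
  assumes "0 \<le> u" "u \<le> 1/2" "0 \<le> v" "v \<le> 1/2" "0 \<le> w" "w \<le> 1/2" "u + v + w \<le> 3/4"
  shows "Pr u v w"
proof -
  consider "w \<le> v \<and> v \<le> u" | "v \<le> w \<and> w \<le> u" | "w \<le> u \<and> u \<le> v" | "u \<le> w \<and> w \<le> v"
    | "v \<le> u \<and> u \<le> w" | "u \<le> v \<and> v \<le> w" by linarith
  then show ?thesis
  proof cases
    case 1 then show ?thesis using core assms by simp
  next
    case 2 then have "Pr u w v" using core[of v w u] assms by simp
    then show ?thesis using Pr_s23[of u v w] by simp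
  next
    case 3 then have "Pr v u w" using core[of w u v] assms by simp
    then show ?thesis using Pr_s12[of u v w] by simp
  next
    case 4 then have "Pr v w u" using core[of u w v] assms by simp
    then show ?thesis using Pr_s12[of u v w] Pr_s23[of v u w] by simp
  next
    case 5 then have "Pr w u v" using core[of v u w] assms by simp
    then show ?thesis using Pr_s12[of w u v] Pr_s23[of u v w] by simp
  next
    case 6 then have "Pr w v u" using core[of u v w] assms by simp
    then show ?thesis using Pr_s12[of w v u] Pr_s23[of v u w] Pr_s12[of u v w] by simp
  qed
qed

lemma Pr_neg2: "Pr u (-v) w = Pr u v w"
  using Pr_s12[of u "-v" w] Pr_neg[of v u w] Pr_s12[of u v w] by simp
lemma Pr_neg3: "Pr u v (-w) = Pr u v w"
  using Pr_s23[of u "-w" v] Pr_neg2[of u w v] Pr_s23[of u v w] by simp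

lemma box:
  assumes "0 \<le> u" "u \<le> 1/2" "0 \<le> v" "v \<le> 1/2" "0 \<le> w" "w \<le> 1/2"
  shows "Pr u v w"
proof (cases "u + v + w \<le> 3/4")
  case True then show ?thesis using sorted assms by simp
next
  case False
  have "Pr (1/2 - u) (1/2 - v) (1/2 - w)" using sorted[of "1/2-u" "1/2-v" "1/2-w"] assms False by simp
  then have "Pr (-u + 1/2) (-v + 1/2) (-w + 1/2)" by (simp add: algebra_simps)
  then have "Pr (-u) (-v) (-w)" by (rule Pr_half_imp)
  then show ?thesis using Pr_neg Pr_neg2 Pr_neg3 by simp
qed

lemma red1:
  assumes "\<And>u'. 0 \<le> u' \<Longrightarrow> u' \<le> 1/2 \<Longrightarrow> Pr u' v w"
  shows "Pr u v w"
proof -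
  define n :: real where "n = of_int (floor u)"
  have nZ: "n \<in> \<int>" "-n \<in> \<int>" "-(n+1) \<in> \<int>" unfolding n_def by simp_all
  have f: "n \<le> u" "u < n + 1" unfolding n_def by linarith+
  show ?thesis
  proof (cases "u - n \<le> 1/2")
    case True
    then have "Pr (u + -n) v w" using assms f by simp
    then show ?thesis using Pr_shift[OF nZ(2)] by simp
  next
    case False
    then have "Pr (-(u + -(n+1))) v w" using assms f by simp
    then have "Pr (u + -(n+1)) v w" using Pr_neg[of "u + -(n+1)" v w] by simp
    then show ?thesis using Pr_shift[OF nZ(3)] by simp
  qed
qed

lemma Pr_all: "Pr u v w"
proof (rule red1)
  fix u' :: real assume u': "0 \<le> u'" "u' \<le> 1/2"
  have "Pr v u' w"
  proof (rule red1)
    fix v' :: real assume v': "0 \<le> v'" "v' \<le> 1/2"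
    have "Pr w u' v'"
    proof (rule red1)
      fix w' :: real assume w': "0 \<le> w'" "w' \<le> 1/2"
      have "Pr u' v' w'" using box u' v' w' by simp
      then show "Pr w' u' v'" using Pr_s12[of u' w' v'] Pr_s23[of u' v' w'] by simp
    qed
    then show "Pr v' u' w" using Pr_s12[of u' w v'] Pr_s23[of u' v' w] Pr_s12[of u' v' w] by simp
  qed
  then show "Pr u' v w" using Pr_s12 by simp
qed

lemma sqD:
  fixes e1 e2 b x :: real
  assumes "e1 \<in> \<int>" "e2 \<in> \<int>" "0 \<le> b" "b \<le> \<bar>x - (e1 - e2)\<bar>" "b \<le> 1 - \<bar>x - (e1 - e2)\<bar>"
  shows "b^2 \<le> x^2"
proof -
  have "e1 - e2 \<in> \<int>" using assms by simp
  then obtain k where k: "e1 - e2 = of_int k" by (metis Ints_cases)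
  define c where "c = x - (e1 - e2)"
  have x: "x = of_int k + c" using k c_def by simp
  have "b \<le> \<bar>x\<bar>"
  proof (cases "k = 0")
    case True then have "e1 - e2 = 0" using k by simp
    then show ?thesis using assms(4) by simp
  next
    case False
    then have "k \<ge> 1 \<or> k \<le> -1" by linarith
    then have "real_of_int k \<ge> 1 \<or> real_of_int k \<le> -1" by (metis of_int_le_iff of_int_1 of_int_minus)
    moreover have cb: "b \<le> \<bar>c\<bar>" "b \<le> 1 - \<bar>c\<bar>" using assms c_def by simp_all
    moreover have a1: "c \<le> \<bar>c\<bar>" "-c \<le> \<bar>c\<bar>" "x \<le> \<bar>x\<bar>" "-x \<le> \<bar>x\<bar>" by auto
    ultimately show ?thesis using x by (elim disjE; linarith)
  qed
  then show ?thesis using assms(3) by (metis abs_ge_zero abs_le_square_iff order_trans power2_abs power_mono)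
qed

lemma lamZ_Z: assumes "lamZ t" "isZ p" shows "(5/24)^2 \<le> (t - p)^2"
proof -
  have A: "t - 5/24 \<in> \<int> \<or> t + 5/24 \<in> \<int>" using assms(1) unfolding lamZ_def .
  have B: "p \<in> \<int>" using assms(2) unfolding isZ_def .
  have c00: "t - 5/24 \<in> \<int> \<Longrightarrow> p \<in> \<int> \<Longrightarrow> ?thesis"
    using sqD[of "t - 5/24" "p" "5/24" "t - p"] by (simp add: algebra_simps)
  have c10: "t + 5/24 \<in> \<int> \<Longrightarrow> p \<in> \<int> \<Longrightarrow> ?thesis"
    using sqD[of "t + 5/24" "p" "5/24" "t - p"] by (simp add: algebra_simps)
  show ?thesis using A B c00 c10 by blast
qed

lemma lamZ_H: assumes "lamZ t" "isH p" shows "(7/24)^2 \<le> (t - p)^2"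
proof -
  have A: "t - 5/24 \<in> \<int> \<or> t + 5/24 \<in> \<int>" using assms(1) unfolding lamZ_def .
  have B: "p - 1/2 \<in> \<int>" using assms(2) unfolding isH_def .
  have c00: "t - 5/24 \<in> \<int> \<Longrightarrow> p - 1/2 \<in> \<int> \<Longrightarrow> ?thesis"
    using sqD[of "t - 5/24" "p - 1/2" "7/24" "t - p"] by (simp add: algebra_simps)
  have c10: "t + 5/24 \<in> \<int> \<Longrightarrow> p - 1/2 \<in> \<int> \<Longrightarrow> ?thesis"
    using sqD[of "t + 5/24" "p - 1/2" "7/24" "t - p"] by (simp add: algebra_simps)
  show ?thesis using A B c00 c10 by blast
qed

lemma lamZ_Q: assumes "lamZ t" "isQ p" shows "(1/24)^2 \<le> (t - p)^2"
proof -
  have A: "t - 5/24 \<in> \<int> \<or> t + 5/24 \<in> \<int>" using assms(1) unfolding lamZ_def .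
  have B: "p - 1/4 \<in> \<int> \<or> p - 3/4 \<in> \<int>" using assms(2) unfolding isQ_def .
  have c00: "t - 5/24 \<in> \<int> \<Longrightarrow> p - 1/4 \<in> \<int> \<Longrightarrow> ?thesis"
    using sqD[of "t - 5/24" "p - 1/4" "1/24" "t - p"] by (simp add: algebra_simps)
  have c01: "t - 5/24 \<in> \<int> \<Longrightarrow> p - 3/4 \<in> \<int> \<Longrightarrow> ?thesis"
    using sqD[of "t - 5/24" "p - 3/4" "1/24" "t - p"] by (simp add: algebra_simps)
  have c10: "t + 5/24 \<in> \<int> \<Longrightarrow> p - 1/4 \<in> \<int> \<Longrightarrow> ?thesis"
    using sqD[of "t + 5/24" "p - 1/4" "1/24" "t - p"] by (simp add: algebra_simps)
  have c11: "t + 5/24 \<in> \<int> \<Longrightarrow> p - 3/4 \<in> \<int> \<Longrightarrow> ?thesis"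
    using sqD[of "t + 5/24" "p - 3/4" "1/24" "t - p"] by (simp add: algebra_simps)
  show ?thesis using A B c00 c01 c10 c11 by blast
qed

lemma lamH_Z: assumes "lamH t" "isZ p" shows "(7/24)^2 \<le> (t - p)^2"
proof -
  have A: "t - 5/24 - 1/2 \<in> \<int> \<or> t + 5/24 - 1/2 \<in> \<int>" using assms(1) unfolding lamH_def .
  have B: "p \<in> \<int>" using assms(2) unfolding isZ_def .
  have c00: "t - 5/24 - 1/2 \<in> \<int> \<Longrightarrow> p \<in> \<int> \<Longrightarrow> ?thesis"
    using sqD[of "t - 5/24 - 1/2" "p" "7/24" "t - p"] by (simp add: algebra_simps)
  have c10: "t + 5/24 - 1/2 \<in> \<int> \<Longrightarrow> p \<in> \<int> \<Longrightarrow> ?thesis"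
    using sqD[of "t + 5/24 - 1/2" "p" "7/24" "t - p"] by (simp add: algebra_simps)
  show ?thesis using A B c00 c10 by blast
qed

lemma lamH_H: assumes "lamH t" "isH p" shows "(5/24)^2 \<le> (t - p)^2"
proof -
  have A: "t - 5/24 - 1/2 \<in> \<int> \<or> t + 5/24 - 1/2 \<in> \<int>" using assms(1) unfolding lamH_def .
  have B: "p - 1/2 \<in> \<int>" using assms(2) unfolding isH_def .
  have c00: "t - 5/24 - 1/2 \<in> \<int> \<Longrightarrow> p - 1/2 \<in> \<int> \<Longrightarrow> ?thesis"
    using sqD[of "t - 5/24 - 1/2" "p - 1/2" "5/24" "t - p"] by (simp add: algebra_simps)
  have c10: "t + 5/24 - 1/2 \<in> \<int> \<Longrightarrow> p - 1/2 \<in> \<int> \<Longrightarrow> ?thesis"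
    using sqD[of "t + 5/24 - 1/2" "p - 1/2" "5/24" "t - p"] by (simp add: algebra_simps)
  show ?thesis using A B c00 c10 by blast
qed

lemma lamH_Q: assumes "lamH t" "isQ p" shows "(1/24)^2 \<le> (t - p)^2"
proof -
  have A: "t - 5/24 - 1/2 \<in> \<int> \<or> t + 5/24 - 1/2 \<in> \<int>" using assms(1) unfolding lamH_def .
  have B: "p - 1/4 \<in> \<int> \<or> p - 3/4 \<in> \<int>" using assms(2) unfolding isQ_def .
  have c00: "t - 5/24 - 1/2 \<in> \<int> \<Longrightarrow> p - 1/4 \<in> \<int> \<Longrightarrow> ?thesis"
    using sqD[of "t - 5/24 - 1/2" "p - 1/4" "1/24" "t - p"] by (simp add: algebra_simps)
  have c01: "t - 5/24 - 1/2 \<in> \<int> \<Longrightarrow> p - 3/4 \<in> \<int> \<Longrightarrow> ?thesis"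
    using sqD[of "t - 5/24 - 1/2" "p - 3/4" "1/24" "t - p"] by (simp add: algebra_simps)
  have c10: "t + 5/24 - 1/2 \<in> \<int> \<Longrightarrow> p - 1/4 \<in> \<int> \<Longrightarrow> ?thesis"
    using sqD[of "t + 5/24 - 1/2" "p - 1/4" "1/24" "t - p"] by (simp add: algebra_simps)
  have c11: "t + 5/24 - 1/2 \<in> \<int> \<Longrightarrow> p - 3/4 \<in> \<int> \<Longrightarrow> ?thesis"
    using sqD[of "t + 5/24 - 1/2" "p - 3/4" "1/24" "t - p"] by (simp add: algebra_simps)
  show ?thesis using A B c00 c01 c10 c11 by blast
qed

lemma lower: assumes "inLam u v w" "inL p q r" shows "75/576 \<le> d3 u v w p q r"
proof -
  have lamZ: "lamZ u \<and> lamZ v \<and> lamZ w \<Longrightarrow> ?thesis"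
  proof -
    assume h: "lamZ u \<and> lamZ v \<and> lamZ w"
    have c0: "isZ p \<and> isZ q \<and> isZ r \<Longrightarrow> ?thesis" using lamZ_Z[of u p] lamZ_Z[of v q] lamZ_Z[of w r] h unfolding d3_def by (simp add: power_divide)
    have c1: "isH p \<and> isH q \<and> isH r \<Longrightarrow> ?thesis" using lamZ_H[of u p] lamZ_H[of v q] lamZ_H[of w r] h unfolding d3_def by (simp add: power_divide)
    have c2: "isZ p \<and> isH q \<and> isQ r \<Longrightarrow> ?thesis" using lamZ_Z[of u p] lamZ_H[of v q] lamZ_Q[of w r] h unfolding d3_def by (simp add: power_divide)
    have c3: "isZ p \<and> isQ q \<and> isH r \<Longrightarrow> ?thesis" using lamZ_Z[of u p] lamZ_Q[of v q] lamZ_H[of w r] h unfolding d3_def by (simp add: power_divide)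
    have c4: "isH p \<and> isZ q \<and> isQ r \<Longrightarrow> ?thesis" using lamZ_H[of u p] lamZ_Z[of v q] lamZ_Q[of w r] h unfolding d3_def by (simp add: power_divide)
    have c5: "isH p \<and> isQ q \<and> isZ r \<Longrightarrow> ?thesis" using lamZ_H[of u p] lamZ_Q[of v q] lamZ_Z[of w r] h unfolding d3_def by (simp add: power_divide)
    have c6: "isQ p \<and> isZ q \<and> isH r \<Longrightarrow> ?thesis" using lamZ_Q[of u p] lamZ_Z[of v q] lamZ_H[of w r] h unfolding d3_def by (simp add: power_divide)
    have c7: "isQ p \<and> isH q \<and> isZ r \<Longrightarrow> ?thesis" using lamZ_Q[of u p] lamZ_H[of v q] lamZ_Z[of w r] h unfolding d3_def by (simp add: power_divide)
    show ?thesis using assms(2) c0 c1 c2 c3 c4 c5 c6 c7 unfolding inL_def by blast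
  qed
  have lamH: "lamH u \<and> lamH v \<and> lamH w \<Longrightarrow> ?thesis"
  proof -
    assume h: "lamH u \<and> lamH v \<and> lamH w"
    have c0: "isZ p \<and> isZ q \<and> isZ r \<Longrightarrow> ?thesis" using lamH_Z[of u p] lamH_Z[of v q] lamH_Z[of w r] h unfolding d3_def by (simp add: power_divide)
    have c1: "isH p \<and> isH q \<and> isH r \<Longrightarrow> ?thesis" using lamH_H[of u p] lamH_H[of v q] lamH_H[of w r] h unfolding d3_def by (simp add: power_divide)
    have c2: "isZ p \<and> isH q \<and> isQ r \<Longrightarrow> ?thesis" using lamH_Z[of u p] lamH_H[of v q] lamH_Q[of w r] h unfolding d3_def by (simp add: power_divide)
    have c3: "isZ p \<and> isQ q \<and> isH r \<Longrightarrow> ?thesis" using lamH_Z[of u p] lamH_Q[of v q] lamH_H[of w r] h unfolding d3_def by (simp add: power_divide)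
    have c4: "isH p \<and> isZ q \<and> isQ r \<Longrightarrow> ?thesis" using lamH_H[of u p] lamH_Z[of v q] lamH_Q[of w r] h unfolding d3_def by (simp add: power_divide)
    have c5: "isH p \<and> isQ q \<and> isZ r \<Longrightarrow> ?thesis" using lamH_H[of u p] lamH_Q[of v q] lamH_Z[of w r] h unfolding d3_def by (simp add: power_divide)
    have c6: "isQ p \<and> isZ q \<and> isH r \<Longrightarrow> ?thesis" using lamH_Q[of u p] lamH_Z[of v q] lamH_H[of w r] h unfolding d3_def by (simp add: power_divide)
    have c7: "isQ p \<and> isH q \<and> isZ r \<Longrightarrow> ?thesis" using lamH_Q[of u p] lamH_H[of v q] lamH_Z[of w r] h unfolding d3_def by (simp add: power_divide)
    show ?thesis using assms(2) c0 c1 c2 c3 c4 c5 c6 c7 unfolding inL_def by blast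
  qed
  show ?thesis using assms(1) lamZ lamH unfolding inLam_def by blast
qed

lemma eqZ: "isZ p \<Longrightarrow> p = 0 \<or> (19/24)^2 \<le> (5/24 - p)^2"
proof -
  assume "isZ p"
  then obtain k where k: "p = of_int k" unfolding isZ_def by (metis Ints_cases)
  have "k = 0 \<or> k \<ge> 1 \<or> k \<le> -1" by linarith
  then have "p = 0 \<or> p \<ge> 1 \<or> p \<le> -1" using k by (metis of_int_0 of_int_le_iff of_int_1 of_int_minus)
  then show ?thesis
  proof (elim disjE)
    assume "p \<ge> 1" then have "19/24 \<le> p - 5/24" by simp
    then have "(19/24)^2 \<le> (p - 5/24)^2" by (rule power_mono) simp
    then show ?thesis by (simp add: power2_commute)
  next
    assume "p \<le> -1" then have "19/24 \<le> 5/24 - p" by simp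
    then have "(19/24)^2 \<le> (5/24 - p)^2" by (rule power_mono) simp
    then show ?thesis by simp
  qed simp
qed

lemma eqH: "isH p \<Longrightarrow> p = 1/2 \<or> (17/24)^2 \<le> (5/24 - p)^2"
proof -
  assume "isH p"
  then obtain k where k: "p - 1/2 = of_int k" unfolding isH_def by (metis Ints_cases)
  have "k = 0 \<or> k \<ge> 1 \<or> k \<le> -1" by linarith
  then have "p - 1/2 = 0 \<or> p - 1/2 \<ge> 1 \<or> p - 1/2 \<le> -1" using k by (metis of_int_0 of_int_le_iff of_int_1 of_int_minus)
  then show ?thesis
  proof (elim disjE)
    assume "p - 1/2 \<ge> 1" then have "17/24 \<le> p - 5/24" by simp
    then have "(17/24)^2 \<le> (p - 5/24)^2" by (rule power_mono) simp
    then show ?thesis by (simp add: power2_commute)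
  next
    assume "p - 1/2 \<le> -1" then have "17/24 \<le> 5/24 - p" by simp
    then have "(17/24)^2 \<le> (5/24 - p)^2" by (rule power_mono) simp
    then show ?thesis by simp
  qed simp
qed

lemma eqQ: "isQ p \<Longrightarrow> p = 1/4 \<or> (11/24)^2 \<le> (5/24 - p)^2"
proof -
  assume "isQ p"
  then have "p - 1/4 \<in> \<int> \<or> p - 3/4 \<in> \<int>" unfolding isQ_def .
  then have "p = 1/4 \<or> p \<ge> 3/4 \<or> p \<le> -1/4"
  proof
    assume "p - 1/4 \<in> \<int>"
    then obtain k where k: "p - 1/4 = of_int k" by (metis Ints_cases)
    have "k = 0 \<or> k \<ge> 1 \<or> k \<le> -1" by linarith
    then have "p - 1/4 = 0 \<or> p - 1/4 \<ge> 1 \<or> p - 1/4 \<le> -1" using k by (metis of_int_0 of_int_le_iff of_int_1 of_int_minus)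
    then show ?thesis by auto
  next
    assume "p - 3/4 \<in> \<int>"
    then obtain k where k: "p - 3/4 = of_int k" by (metis Ints_cases)
    have "k \<ge> 0 \<or> k \<le> -1" by linarith
    then have "p - 3/4 \<ge> 0 \<or> p - 3/4 \<le> -1" using k by (metis of_int_0 of_int_le_iff of_int_1 of_int_minus)
    then show ?thesis by auto
  qed
  then show ?thesis
  proof (elim disjE)
    assume "p \<ge> 3/4" then have "11/24 \<le> p - 5/24" by simp
    then have "(11/24)^2 \<le> (p - 5/24)^2" by (rule power_mono) simp
    then show ?thesis by (simp add: power2_commute)
  next
    assume "p \<le> -1/4" then have "11/24 \<le> 5/24 - p" by simp
    then have "(11/24)^2 \<le> (5/24 - p)^2" by (rule power_mono) simp
    then show ?thesis by simp
  qed simp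
qed

lemma lamZc: "lamZ (5/24)" unfolding lamZ_def by simp

lemma eqimp: assumes "inL p q r" "d3 (5/24) (5/24) (5/24) p q r = 75/576"
  shows "(p,q,r) \<in> {(0,0,0),(0,1/4,1/2),(0,1/2,1/4),(1/4,1/2,0),(1/2,1/4,0),(1/4,0,1/2),(1/2,0,1/4)}"
proof -
  have s: "(5/24 - p)^2 + (5/24-q)^2 + (5/24-r)^2 = 75/576" using assms(2) unfolding d3_def .
  have c0: "isZ p \<and> isZ q \<and> isZ r \<Longrightarrow> (p,q,r) = (0,0,0)"
  proof -
    assume h: "isZ p \<and> isZ q \<and> isZ r"
    have e: "p = 0 \<or> 361/576 \<le> (5/24 - p)^2" "q = 0 \<or> 361/576 \<le> (5/24 - q)^2" "r = 0 \<or> 361/576 \<le> (5/24 - r)^2"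
      using eqZ[of p] eqZ[of q] eqZ[of r] h by (auto simp: power_divide)
    have bb: "25/576 \<le> (5/24-p)^2" "25/576 \<le> (5/24-q)^2" "25/576 \<le> (5/24-r)^2"
      using lamZ_Z[OF lamZc, of p] lamZ_Z[OF lamZc, of q] lamZ_Z[OF lamZc, of r] h by (auto simp: power_divide)
    from e(1) e(2) e(3) show ?thesis using bb s by (elim disjE; (simp; fail)?; linarith)
  qed
  have c1: "isH p \<and> isH q \<and> isH r \<Longrightarrow> False"
  proof -
    assume h: "isH p \<and> isH q \<and> isH r"
    have b2: "(7/24)^2 \<le> (5/24-p)^2" "(7/24)^2 \<le> (5/24-q)^2" "(7/24)^2 \<le> (5/24-r)^2"
      using lamZ_H[OF lamZc, of p] lamZ_H[OF lamZc, of q] lamZ_H[OF lamZc, of r] h by auto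
    show False using b2 s by (simp add: power_divide)
  qed
  have c2: "isZ p \<and> isH q \<and> isQ r \<Longrightarrow> (p,q,r) = (0,1/2,1/4)"
  proof -
    assume h: "isZ p \<and> isH q \<and> isQ r"
    have e: "p = 0 \<or> 361/576 \<le> (5/24 - p)^2" "q = 1/2 \<or> 289/576 \<le> (5/24 - q)^2" "r = 1/4 \<or> 121/576 \<le> (5/24 - r)^2"
      using eqZ[of p] eqH[of q] eqQ[of r] h by (auto simp: power_divide)
    have bb: "25/576 \<le> (5/24-p)^2" "49/576 \<le> (5/24-q)^2" "1/576 \<le> (5/24-r)^2"
      using lamZ_Z[OF lamZc, of p] lamZ_H[OF lamZc, of q] lamZ_Q[OF lamZc, of r] h by (auto simp: power_divide)
    from e(1) e(2) e(3) show ?thesis using bb s by (elim disjE; (simp; fail)?; linarith)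
  qed
  have c3: "isZ p \<and> isQ q \<and> isH r \<Longrightarrow> (p,q,r) = (0,1/4,1/2)"
  proof -
    assume h: "isZ p \<and> isQ q \<and> isH r"
    have e: "p = 0 \<or> 361/576 \<le> (5/24 - p)^2" "q = 1/4 \<or> 121/576 \<le> (5/24 - q)^2" "r = 1/2 \<or> 289/576 \<le> (5/24 - r)^2"
      using eqZ[of p] eqQ[of q] eqH[of r] h by (auto simp: power_divide)
    have bb: "25/576 \<le> (5/24-p)^2" "1/576 \<le> (5/24-q)^2" "49/576 \<le> (5/24-r)^2"
      using lamZ_Z[OF lamZc, of p] lamZ_Q[OF lamZc, of q] lamZ_H[OF lamZc, of r] h by (auto simp: power_divide)
    from e(1) e(2) e(3) show ?thesis using bb s by (elim disjE; (simp; fail)?; linarith)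
  qed
  have c4: "isH p \<and> isZ q \<and> isQ r \<Longrightarrow> (p,q,r) = (1/2,0,1/4)"
  proof -
    assume h: "isH p \<and> isZ q \<and> isQ r"
    have e: "p = 1/2 \<or> 289/576 \<le> (5/24 - p)^2" "q = 0 \<or> 361/576 \<le> (5/24 - q)^2" "r = 1/4 \<or> 121/576 \<le> (5/24 - r)^2"
      using eqH[of p] eqZ[of q] eqQ[of r] h by (auto simp: power_divide)
    have bb: "49/576 \<le> (5/24-p)^2" "25/576 \<le> (5/24-q)^2" "1/576 \<le> (5/24-r)^2"
      using lamZ_H[OF lamZc, of p] lamZ_Z[OF lamZc, of q] lamZ_Q[OF lamZc, of r] h by (auto simp: power_divide)
    from e(1) e(2) e(3) show ?thesis using bb s by (elim disjE; (simp; fail)?; linarith)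
  qed
  have c5: "isH p \<and> isQ q \<and> isZ r \<Longrightarrow> (p,q,r) = (1/2,1/4,0)"
  proof -
    assume h: "isH p \<and> isQ q \<and> isZ r"
    have e: "p = 1/2 \<or> 289/576 \<le> (5/24 - p)^2" "q = 1/4 \<or> 121/576 \<le> (5/24 - q)^2" "r = 0 \<or> 361/576 \<le> (5/24 - r)^2"
      using eqH[of p] eqQ[of q] eqZ[of r] h by (auto simp: power_divide)
    have bb: "49/576 \<le> (5/24-p)^2" "1/576 \<le> (5/24-q)^2" "25/576 \<le> (5/24-r)^2"
      using lamZ_H[OF lamZc, of p] lamZ_Q[OF lamZc, of q] lamZ_Z[OF lamZc, of r] h by (auto simp: power_divide)
    from e(1) e(2) e(3) show ?thesis using bb s by (elim disjE; (simp; fail)?; linarith)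
  qed
  have c6: "isQ p \<and> isZ q \<and> isH r \<Longrightarrow> (p,q,r) = (1/4,0,1/2)"
  proof -
    assume h: "isQ p \<and> isZ q \<and> isH r"
    have e: "p = 1/4 \<or> 121/576 \<le> (5/24 - p)^2" "q = 0 \<or> 361/576 \<le> (5/24 - q)^2" "r = 1/2 \<or> 289/576 \<le> (5/24 - r)^2"
      using eqQ[of p] eqZ[of q] eqH[of r] h by (auto simp: power_divide)
    have bb: "1/576 \<le> (5/24-p)^2" "25/576 \<le> (5/24-q)^2" "49/576 \<le> (5/24-r)^2"
      using lamZ_Q[OF lamZc, of p] lamZ_Z[OF lamZc, of q] lamZ_H[OF lamZc, of r] h by (auto simp: power_divide)
    from e(1) e(2) e(3) show ?thesis using bb s by (elim disjE; (simp; fail)?; linarith)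
  qed
  have c7: "isQ p \<and> isH q \<and> isZ r \<Longrightarrow> (p,q,r) = (1/4,1/2,0)"
  proof -
    assume h: "isQ p \<and> isH q \<and> isZ r"
    have e: "p = 1/4 \<or> 121/576 \<le> (5/24 - p)^2" "q = 1/2 \<or> 289/576 \<le> (5/24 - q)^2" "r = 0 \<or> 361/576 \<le> (5/24 - r)^2"
      using eqQ[of p] eqH[of q] eqZ[of r] h by (auto simp: power_divide)
    have bb: "1/576 \<le> (5/24-p)^2" "49/576 \<le> (5/24-q)^2" "25/576 \<le> (5/24-r)^2"
      using lamZ_Q[OF lamZc, of p] lamZ_H[OF lamZc, of q] lamZ_Z[OF lamZc, of r] h by (auto simp: power_divide)
    from e(1) e(2) e(3) show ?thesis using bb s by (elim disjE; (simp; fail)?; linarith)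
  qed
  have D: "(isZ p \<and> isZ q \<and> isZ r) \<or> (isH p \<and> isH q \<and> isH r) \<or> (isZ p \<and> isH q \<and> isQ r) \<or> (isZ p \<and> isQ q \<and> isH r) \<or> (isH p \<and> isZ q \<and> isQ r) \<or> (isH p \<and> isQ q \<and> isZ r) \<or> (isQ p \<and> isZ q \<and> isH r) \<or> (isQ p \<and> isH q \<and> isZ r)" using assms(1) unfolding inL_def .
  then show ?thesis
  proof (elim disjE)
    assume "isZ p \<and> isZ q \<and> isZ r" then show ?thesis using c0 by simp
  next
    assume "isH p \<and> isH q \<and> isH r" then show ?thesis using c1 by simp
  next
    assume "isZ p \<and> isH q \<and> isQ r" then show ?thesis using c2 by simp
  next
    assume "isZ p \<and> isQ q \<and> isH r" then show ?thesis using c3 by simp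
  next
    assume "isH p \<and> isZ q \<and> isQ r" then show ?thesis using c4 by simp
  next
    assume "isH p \<and> isQ q \<and> isZ r" then show ?thesis using c5 by simp
  next
    assume "isQ p \<and> isZ q \<and> isH r" then show ?thesis using c6 by simp
  next
    assume "isQ p \<and> isH q \<and> isZ r" then show ?thesis using c7 by simp
  qed
qed




lemma pt_nth [simp]: "pt x y z $ 1 = x" "pt x y z $ 2 = y" "pt x y z $ 3 = z"
  by (simp_all add: pt_def)

lemma pt_eta: "v = pt (v$1) (v$2) (v$3)"
  unfolding vec_eq_iff forall_3 by simp

lemma pt_eq: "pt a b c = pt a' b' c' \<longleftrightarrow> a = a' \<and> b = b' \<and> c = c'"
  unfolding vec_eq_iff forall_3 by simp

lemma pt_diff: "pt a b c - pt d e f = pt (a-d) (b-e) (c-f)"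
  unfolding vec_eq_iff forall_3 by simp
lemma pt_add: "pt a b c + pt d e f = pt (a+d) (b+e) (c+f)"
  unfolding vec_eq_iff forall_3 by simp
lemma pt_scale: "k *\<^sub>R pt a b c = pt (k*a) (k*b) (k*c)"
  unfolding vec_eq_iff forall_3 by simp

lemma norm_pt: "norm (pt a b c) = sqrt (a^2 + b^2 + c^2)"
  unfolding norm_vec_def L2_set_def sum_3 by simp

lemma Ints_ex: "(t::real) \<in> \<int> \<longleftrightarrow> (\<exists>i::int. t = of_int i)"
  by (metis Ints_cases Ints_of_int)
lemma isZ_char: "isZ t \<longleftrightarrow> (\<exists>i::int. t = of_int i)"
  unfolding isZ_def by (rule Ints_ex)
lemma isH_char: "isH t \<longleftrightarrow> (\<exists>i::int. t = of_int i + 1/2)"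
proof -
  have "\<And>i. (t - 1/2 = of_int i) = (t = of_int i + 1/2)" by linarith
  then show ?thesis unfolding isH_def Ints_ex by simp
qed
lemma isQ_char: "isQ t \<longleftrightarrow> (\<exists>(i::int) (e::real). e \<in> {1/4, 3/4} \<and> t = of_int i + e)"
proof -
  have 1: "\<And>i. (t - 1/4 = of_int i) = (t = of_int i + 1/4)" by linarith
  have 2: "\<And>i. (t - 3/4 = of_int i) = (t = of_int i + 3/4)" by linarith
  have "isQ t \<longleftrightarrow> (\<exists>i::int. t = of_int i + 1/4) \<or> (\<exists>i::int. t = of_int i + 3/4)"
    unfolding isQ_def Ints_ex 1 2 by simp
  also have "\<dots> \<longleftrightarrow> (\<exists>(i::int) (e::real). e \<in> {1/4, 3/4} \<and> t = of_int i + e)" by blast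
  finally show ?thesis .
qed

lemma mem_Lint: assumes "a > 0" shows "pt x y z \<in> Lint a \<longleftrightarrow> isZ (x/a) \<and> isZ (y/a) \<and> isZ (z/a)"
proof
  assume "pt x y z \<in> Lint a"
  then obtain i j k where "pt x y z = pt (a * of_int i) (a * of_int j) (a * of_int k)" unfolding Lint_def by blast
  then show "isZ (x/a) \<and> isZ (y/a) \<and> isZ (z/a)" using assms unfolding pt_eq isZ_char by auto
next
  assume "isZ (x/a) \<and> isZ (y/a) \<and> isZ (z/a)"
  then obtain i j k where "x/a = of_int i" "y/a = of_int j" "z/a = of_int k" unfolding isZ_char by blast
  then have "pt x y z = pt (a * of_int i) (a * of_int j) (a * of_int k)" using assms by (simp add: pt_eq field_simps)
  then show "pt x y z \<in> Lint a" unfolding Lint_def by blast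
qed

lemma mem_Lhalf: assumes "a > 0" shows "pt x y z \<in> Lhalf a \<longleftrightarrow> isH (x/a) \<and> isH (y/a) \<and> isH (z/a)"
proof
  assume "pt x y z \<in> Lhalf a"
  then obtain i j k where "pt x y z = pt (a * (of_int i + 1/2)) (a * (of_int j + 1/2)) (a * (of_int k + 1/2))" unfolding Lhalf_def by blast
  then show "isH (x/a) \<and> isH (y/a) \<and> isH (z/a)" using assms unfolding pt_eq isH_char by auto
next
  assume "isH (x/a) \<and> isH (y/a) \<and> isH (z/a)"
  then obtain i j k where "x/a = of_int i + 1/2" "y/a = of_int j + 1/2" "z/a = of_int k + 1/2" unfolding isH_char by blast
  then have "pt x y z = pt (a * (of_int i + 1/2)) (a * (of_int j + 1/2)) (a * (of_int k + 1/2))" using assms by (simp add: pt_eq field_simps)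
  then show "pt x y z \<in> Lhalf a" unfolding Lhalf_def by blast
qed


lemma Wchar: "(\<exists>(i::int) (j::int) (k::int) (e::real). e \<in> {1/4,3/4} \<and> (t1,t2,t3) \<in> perms3 (of_int i, of_int j + 1/2, of_int k + e))
  \<longleftrightarrow> (isZ t1 \<and> isH t2 \<and> isQ t3) \<or> (isZ t1 \<and> isQ t2 \<and> isH t3) \<or> (isH t1 \<and> isZ t2 \<and> isQ t3)
     \<or> (isH t1 \<and> isQ t2 \<and> isZ t3) \<or> (isQ t1 \<and> isZ t2 \<and> isH t3) \<or> (isQ t1 \<and> isH t2 \<and> isZ t3)"
  unfolding perms3_def isZ_char isH_char isQ_char by simp blast

lemma mem_W: assumes "a > 0" shows "pt x y z \<in> W a \<longleftrightarrow>
  (\<exists>(i::int) (j::int) (k::int) (e::real). e \<in> {1/4,3/4} \<and> (x/a,y/a,z/a) \<in> perms3 (of_int i, of_int j + 1/2, of_int k + e))"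
proof
  assume "pt x y z \<in> W a"
  then obtain u1 u2 u3 where h: "pt x y z = a *\<^sub>R pt u1 u2 u3"
    "\<exists>(i::int) (j::int) (k::int) (e::real). e \<in> {1/4,3/4} \<and> (u1,u2,u3) \<in> perms3 (of_int i, of_int j + 1/2, of_int k + e)"
    unfolding W_def by blast
  from h(1) have "u1 = x/a" "u2 = y/a" "u3 = z/a" using assms by (auto simp: pt_scale pt_eq)
  then show "\<exists>(i::int) (j::int) (k::int) (e::real). e \<in> {1/4,3/4} \<and> (x/a,y/a,z/a) \<in> perms3 (of_int i, of_int j + 1/2, of_int k + e)"
    using h(2) by simp
next
  assume h: "\<exists>(i::int) (j::int) (k::int) (e::real). e \<in> {1/4,3/4} \<and> (x/a,y/a,z/a) \<in> perms3 (of_int i, of_int j + 1/2, of_int k + e)"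
  have "pt x y z = a *\<^sub>R pt (x/a) (y/a) (z/a)" using assms by (simp add: pt_scale pt_eq)
  then show "pt x y z \<in> W a" unfolding W_def using h by blast
qed

lemma mem_L2: assumes "a > 0" shows "pt x y z \<in> L2 a \<longleftrightarrow> inL (x/a) (y/a) (z/a)"
  unfolding L2_def Un_iff mem_Lint[OF assms] mem_Lhalf[OF assms] mem_W[OF assms] Wchar inL_def
  by simp


lemma lamZ_ex: "lamZ t \<longleftrightarrow> (\<exists>s\<in>{-1,1}. isZ (t - 5/24* s))"
  unfolding lamZ_def isZ_def by auto
lemma lamH_ex: "lamH t \<longleftrightarrow> (\<exists>s\<in>{-1,1}. isH (t - 5/24* s))"
  unfolding lamH_def isH_def by (auto simp: algebra_simps)

lemma Lam_comp: "(p + k *\<^sub>R pt s1 s2 s3) = pt (p$1 + k* s1) (p$2 + k* s2) (p$3 + k* s3)"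
  by (subst pt_eta[of p]) (simp add: pt_scale pt_add)

lemma mem_Lam: assumes "a > 0" shows "v \<in> Lambda a \<longleftrightarrow> inLam (v$1/a) (v$2/a) (v$3/a)"
proof
  assume "v \<in> Lambda a"
  then obtain p s1 s2 s3 where h: "v = p + (5 * a / 24) *\<^sub>R pt s1 s2 s3" "p \<in> Lint a \<union> Lhalf a"
    "s1 \<in> {-1,1}" "s2 \<in> {-1,1}" "s3 \<in> {-1,1}" unfolding Lambda_def by blast
  have e: "v$1/a - 5/24* s1 = p$1/a" "v$2/a - 5/24* s2 = p$2/a" "v$3/a - 5/24* s3 = p$3/a"
    using h(1) assms by (simp_all add: Lam_comp field_simps)
  have "p \<in> Lint a \<or> p \<in> Lhalf a" using h(2) by simp
  then show "inLam (v$1/a) (v$2/a) (v$3/a)"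
  proof
    assume "p \<in> Lint a"
    then have "isZ (p$1/a) \<and> isZ (p$2/a) \<and> isZ (p$3/a)" using mem_Lint[OF assms] pt_eta[of p] by metis
    then show ?thesis unfolding inLam_def lamZ_ex using e h(3-5) by metis
  next
    assume "p \<in> Lhalf a"
    then have "isH (p$1/a) \<and> isH (p$2/a) \<and> isH (p$3/a)" using mem_Lhalf[OF assms] pt_eta[of p] by metis
    then show ?thesis unfolding inLam_def lamH_ex using e h(3-5) by metis
  qed
next
  assume h: "inLam (v$1/a) (v$2/a) (v$3/a)"
  have repr: "v = pt (a*(v$1/a - 5/24* s1)) (a*(v$2/a - 5/24* s2)) (a*(v$3/a - 5/24* s3)) + (5 * a / 24) *\<^sub>R pt s1 s2 s3"
    for s1 s2 s3 using assms by (subst pt_eta[of v]) (simp add: pt_scale pt_add pt_eq field_simps)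
  have mZ: "pt (a*x) (a*y) (a*z) \<in> Lint a \<longleftrightarrow> isZ x \<and> isZ y \<and> isZ z" for x y z
    using mem_Lint[OF assms] assms by simp
  have mH: "pt (a*x) (a*y) (a*z) \<in> Lhalf a \<longleftrightarrow> isH x \<and> isH y \<and> isH z" for x y z
    using mem_Lhalf[OF assms] assms by simp
  from h show "v \<in> Lambda a" unfolding inLam_def
  proof
    assume "lamZ (v$1/a) \<and> lamZ (v$2/a) \<and> lamZ (v$3/a)"
    then obtain s1 s2 s3 where s: "s1 \<in> {-1,1}" "s2 \<in> {-1,1}" "s3 \<in> {-1,1}"
      "isZ (v$1/a - 5/24* s1)" "isZ (v$2/a - 5/24* s2)" "isZ (v$3/a - 5/24* s3)"
      unfolding lamZ_ex by blast
    have "pt (a*(v$1/a - 5/24* s1)) (a*(v$2/a - 5/24* s2)) (a*(v$3/a - 5/24* s3)) \<in> Lint a \<union> Lhalf a"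
      using mZ s by blast
    then show ?thesis unfolding Lambda_def using repr[of s1 s2 s3] s(1-3) by blast
  next
    assume "lamH (v$1/a) \<and> lamH (v$2/a) \<and> lamH (v$3/a)"
    then obtain s1 s2 s3 where s: "s1 \<in> {-1,1}" "s2 \<in> {-1,1}" "s3 \<in> {-1,1}"
      "isH (v$1/a - 5/24* s1)" "isH (v$2/a - 5/24* s2)" "isH (v$3/a - 5/24* s3)"
      unfolding lamH_ex by blast
    have "pt (a*(v$1/a - 5/24* s1)) (a*(v$2/a - 5/24* s2)) (a*(v$3/a - 5/24* s3)) \<in> Lint a \<union> Lhalf a"
      using mH s by blast
    then show ?thesis unfolding Lambda_def using repr[of s1 s2 s3] s(1-3) by blast
  qed
qed


lemma norm_scaled: fixes x y :: "real^3" assumes "a > 0"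
  shows "norm (x - y) = a * sqrt (d3 (x$1/a) (x$2/a) (x$3/a) (y$1/a) (y$2/a) (y$3/a))"
proof -
  have "x - y = pt (x$1 - y$1) (x$2 - y$2) (x$3 - y$3)"
    by (subst pt_eta[of x], subst pt_eta[of y]) (simp add: pt_diff)
  then have "norm (x - y) = sqrt ((x$1 - y$1)^2 + (x$2 - y$2)^2 + (x$3 - y$3)^2)" by (simp add: norm_pt)
  also have "(x$1 - y$1)^2 + (x$2 - y$2)^2 + (x$3 - y$3)^2 = a^2 * d3 (x$1/a) (x$2/a) (x$3/a) (y$1/a) (y$2/a) (y$3/a)"
    using assms unfolding d3_def by (simp add: power2_eq_square field_simps)
  also have "sqrt (a^2 * d3 (x$1/a) (x$2/a) (x$3/a) (y$1/a) (y$2/a) (y$3/a)) = a * sqrt (d3 (x$1/a) (x$2/a) (x$3/a) (y$1/a) (y$2/a) (y$3/a))"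
    using assms by (simp add: real_sqrt_mult)
  finally show ?thesis .
qed

lemma sqrt75: "sqrt (75/576) = 5 * sqrt 3 / 24"
  by (rule real_sqrt_unique) (simp_all add: power_divide power_mult_distrib)

theorem mainTheorem5:
  fixes a :: real
  assumes "a > 0"
  shows "(SUP x::real^3. infdist x (L2 a)) = 5 * sqrt 3 / 24 * a
    \<and> {x::real^3. infdist x (L2 a) = 5 * sqrt 3 / 24 * a} = Lambda a
    \<and> {p \<in> L2 a. norm (pt (5*a/24) (5*a/24) (5*a/24) - p) = 5 * sqrt 3 / 24 * a}
         = {pt 0 0 0, pt 0 (a/4) (a/2), pt 0 (a/2) (a/4), pt (a/4) (a/2) 0,
            pt (a/2) (a/4) 0, pt (a/4) 0 (a/2), pt (a/2) 0 (a/4)}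
    \<and> (\<forall>p \<in> L2 a. norm (pt (5*a/24) (5*a/24) (5*a/24) - p) \<ge> 5 * sqrt 3 / 24 * a)"
proof -
  define r where "r = 5 * sqrt 3 / 24 * a"
  have rr: "r = a * sqrt (75/576)" unfolding r_def sqrt75 by simp
  note NS = norm_scaled[OF assms]
  have le_iff: "a * sqrt d \<le> r \<longleftrightarrow> d \<le> 75/576" for d unfolding rr using assms by simp
  have less_iff: "a * sqrt d < r \<longleftrightarrow> d < 75/576" for d unfolding rr using assms by simp
  have eq_iff: "a * sqrt d = r \<longleftrightarrow> d = 75/576" for d unfolding rr using assms by simp
  have ge_iff: "r \<le> a * sqrt d \<longleftrightarrow> 75/576 \<le> d" for d unfolding rr using assms by simp
  have aa: "a * t / a = t" for t using assms by simp
  have F1: "\<exists>P \<in> L2 a. norm (x - P) \<le> r \<and> (x \<notin> Lambda a \<longrightarrow> norm (x - P) < r)" for x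
  proof -
    obtain p q s where h: "inL p q s" "d3 (x$1/a) (x$2/a) (x$3/a) p q s \<le> 75/576"
      "\<not> inLam (x$1/a) (x$2/a) (x$3/a) \<longrightarrow> d3 (x$1/a) (x$2/a) (x$3/a) p q s < 75/576"
      using Pr_all unfolding Pr_def by blast
    have P: "pt (a*p) (a*q) (a* s) \<in> L2 a" using mem_L2[OF assms] h(1) aa by simp
    have n: "norm (x - pt (a*p) (a*q) (a* s)) = a * sqrt (d3 (x$1/a) (x$2/a) (x$3/a) p q s)"
      using NS aa by simp
    show ?thesis using P n h le_iff less_iff mem_Lam[OF assms, of x] by metis
  qed
  have F2: "norm (x - P) \<ge> r" if "x \<in> Lambda a" "P \<in> L2 a" for x P
  proof -
    have "inLam (x$1/a) (x$2/a) (x$3/a)" using that(1) mem_Lam[OF assms] by blast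
    moreover have "inL (P$1/a) (P$2/a) (P$3/a)" using that(2) mem_L2[OF assms] pt_eta[of P] by metis
    ultimately show ?thesis using lower NS ge_iff by metis
  qed
  have ne: "L2 a \<noteq> {}" using mem_L2[OF assms, of 0 0 0] inL_pts(1) by auto
  have inf1: "infdist x (L2 a) \<le> r" for x using F1[of x] infdist_le2 by (metis dist_norm)
  have inf2: "infdist x (L2 a) < r" if "x \<notin> Lambda a" for x
    using F1[of x] that infdist_le by (metis dist_norm order.strict_trans1)
  have inf3: "infdist x (L2 a) = r" if "x \<in> Lambda a" for x
  proof -
    have "r \<le> infdist x (L2 a)" unfolding infdist_notempty[OF ne]
      by (rule cINF_greatest[OF ne]) (simp add: dist_norm F2[OF that])
    then show ?thesis using inf1[of x] by simp
  qed
  define x0 where "x0 = pt (5*a/24) (5*a/24) (5*a/24)"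
  have x0c: "x0$1/a = 5/24" "x0$2/a = 5/24" "x0$3/a = 5/24" unfolding x0_def using assms by simp_all
  have x0L: "x0 \<in> Lambda a" using mem_Lam[OF assms, of x0] x0c inLam_c by simp
  have P1: "(SUP x::real^3. infdist x (L2 a)) = r"
    by (rule cSup_eq_maximum) (use inf3[OF x0L] inf1 in auto)
  have P2: "{x::real^3. infdist x (L2 a) = r} = Lambda a"
    using inf2 inf3 by (auto simp: order.strict_implies_not_eq)
  have P4: "\<forall>p \<in> L2 a. norm (x0 - p) \<ge> r" using F2[OF x0L] by blast
  have P3: "{p \<in> L2 a. norm (x0 - p) = r} = {pt 0 0 0, pt 0 (a/4) (a/2), pt 0 (a/2) (a/4), pt (a/4) (a/2) 0,
            pt (a/2) (a/4) 0, pt (a/4) 0 (a/2), pt (a/2) 0 (a/4)}"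
  proof
    show "{p \<in> L2 a. norm (x0 - p) = r} \<subseteq> {pt 0 0 0, pt 0 (a/4) (a/2), pt 0 (a/2) (a/4), pt (a/4) (a/2) 0,
            pt (a/2) (a/4) 0, pt (a/4) 0 (a/2), pt (a/2) 0 (a/4)}"
    proof
      fix p assume "p \<in> {p \<in> L2 a. norm (x0 - p) = r}"
      then have h: "p \<in> L2 a" "norm (x0 - p) = r" by auto
      have "inL (p$1/a) (p$2/a) (p$3/a)" using h(1) mem_L2[OF assms] pt_eta[of p] by metis
      moreover have "d3 (5/24) (5/24) (5/24) (p$1/a) (p$2/a) (p$3/a) = 75/576"
        using h(2) NS[of x0 p] x0c eq_iff by simp
      ultimately have m: "(p$1/a, p$2/a, p$3/a) \<in> {(0,0,0),(0,1/4,1/2),(0,1/2,1/4),(1/4,1/2,0),(1/2,1/4,0),(1/4,0,1/2),(1/2,0,1/4)}"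
        by (rule eqimp)
      obtain t1 t2 t3 where tt: "t1 = p$1/a" "t2 = p$2/a" "t3 = p$3/a" by blast
      have pe: "p = pt (a * t1) (a * t2) (a * t3)" using assms pt_eta[of p] tt by simp
      from m have "(t1,t2,t3) = (0,0,0) \<or> (t1,t2,t3) = (0,1/4,1/2) \<or> (t1,t2,t3) = (0,1/2,1/4) \<or> (t1,t2,t3) = (1/4,1/2,0)
        \<or> (t1,t2,t3) = (1/2,1/4,0) \<or> (t1,t2,t3) = (1/4,0,1/2) \<or> (t1,t2,t3) = (1/2,0,1/4)" unfolding tt by simp
      then show "p \<in> {pt 0 0 0, pt 0 (a/4) (a/2), pt 0 (a/2) (a/4), pt (a/4) (a/2) 0,
            pt (a/2) (a/4) 0, pt (a/4) 0 (a/2), pt (a/2) 0 (a/4)}"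
        using pe by (elim disjE; simp only: prod.inject; elim conjE; hypsubst; simp)
    qed
  next
    have mem: "pt (a*t1) (a*t2) (a*t3) \<in> {p \<in> L2 a. norm (x0 - p) = r}"
      if "inL t1 t2 t3" "d3 (5/24) (5/24) (5/24) t1 t2 t3 = 75/576" for t1 t2 t3
    proof -
      have "pt (a*t1) (a*t2) (a*t3) \<in> L2 a" using mem_L2[OF assms] that(1) aa by simp
      moreover have "norm (x0 - pt (a*t1) (a*t2) (a*t3)) = r" unfolding NS x0c pt_nth aa using that(2) eq_iff by simp
      ultimately show ?thesis by simp
    qed
    have e: "d3 (5/24) (5/24) (5/24) 0 0 0 = 75/576" "d3 (5/24) (5/24) (5/24) 0 (1/4) (1/2) = 75/576"
      "d3 (5/24) (5/24) (5/24) 0 (1/2) (1/4) = 75/576" "d3 (5/24) (5/24) (5/24) (1/4) (1/2) 0 = 75/576"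
      "d3 (5/24) (5/24) (5/24) (1/2) (1/4) 0 = 75/576" "d3 (5/24) (5/24) (5/24) (1/4) 0 (1/2) = 75/576"
      "d3 (5/24) (5/24) (5/24) (1/2) 0 (1/4) = 75/576"
      unfolding d3_def by (simp_all add: power_divide)
    have i: "inL 0 0 0" "inL 0 (1/4) (1/2)" "inL 0 (1/2) (1/4)" "inL (1/4) (1/2) 0" "inL (1/2) (1/4) 0"
      "inL (1/4) 0 (1/2)" "inL (1/2) 0 (1/4)"
      unfolding inL_def isZ_def isH_def isQ_def by simp_all
    have m1: "pt 0 0 0 \<in> {p \<in> L2 a. norm (x0 - p) = r}" using mem[OF i(1) e(1)] by simp
    have m2: "pt 0 (a/4) (a/2) \<in> {p \<in> L2 a. norm (x0 - p) = r}" using mem[OF i(2) e(2)] by simp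
    have m3: "pt 0 (a/2) (a/4) \<in> {p \<in> L2 a. norm (x0 - p) = r}" using mem[OF i(3) e(3)] by simp
    have m4: "pt (a/4) (a/2) 0 \<in> {p \<in> L2 a. norm (x0 - p) = r}" using mem[OF i(4) e(4)] by simp
    have m5: "pt (a/2) (a/4) 0 \<in> {p \<in> L2 a. norm (x0 - p) = r}" using mem[OF i(5) e(5)] by simp
    have m6: "pt (a/4) 0 (a/2) \<in> {p \<in> L2 a. norm (x0 - p) = r}" using mem[OF i(6) e(6)] by simp
    have m7: "pt (a/2) 0 (a/4) \<in> {p \<in> L2 a. norm (x0 - p) = r}" using mem[OF i(7) e(7)] by simp
    show "{pt 0 0 0, pt 0 (a/4) (a/2), pt 0 (a/2) (a/4), pt (a/4) (a/2) 0,
            pt (a/2) (a/4) 0, pt (a/4) 0 (a/2), pt (a/2) 0 (a/4)} \<subseteq> {p \<in> L2 a. norm (x0 - p) = r}"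
      using m1 m2 m3 m4 m5 m6 m7 by (simp only: insert_subset empty_subsetI simp_thms)
  qed
  show ?thesis using P1 P2 P3 P4 unfolding r_def x0_def by simp
qed


end
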